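(* Let $(V,\mathcal H,\iota,W)$ be an abelian functional theory with set of weights $\Omega$ and let $\rho\in\mathrm{conv}(\Omega)$. Then $\rho$ is a critical value of the smooth map $\iota^*|_{\mathcal P}:\mathcal P\to\mathrm{aff}(\Omega)$ if and only if $\rho$ lies in the convex hull of some $\dim\mathrm{conv}(\Omega)$ $(=\dim V-\dim\iota^{-1}(\mathrm{span}\{\mathbb 1\}))$ weights.
   Context: A generalized functional theory is a tuple $(V,\mathcal H,\iota,W)$ with $V$ a finite-dimensional real vector space, $\mathcal H$ a finite-dimensional complex Hilbert space, $\iota:V\to i\mathfrak u(\mathcal H)$ linear into the Hermitian operators, $W$ Hermitian; it is abelian if all $\iota(v)$ commute. States are regarded as linear functionals on $i\mathfrak u(\mathcal H)$ via the trace and $\iota^*$ is the dual map; $\mathcal P$, the set of pure states, is a smooth manifold (projective space). A weight is $\alpha\in V^*$ such that some nonzero $\psi$ satisfies $\iota(v)\psi=\langle\alpha,v\rangle\psi$ for all $v$; $\Omega$ is the set of weights, and $\iota^*(\mathcal P)=\mathrm{conv}(\Omega)$. A point is a critical value of a smooth map if it is not a regular value, i.e. the derivative fails to be surjective at some point of its preimage. *)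

theory Defs
  imports "HOL-Analysis.Analysis"
begin

text \<open>Hilbert space H = complex^'n, operators = complex^'n^'n.\<close>

definition hermitian :: "complex^'n^'n \<Rightarrow> bool" where
  "hermitian A \<longleftrightarrow> (\<forall>i j. A $ i $ j = cnj (A $ j $ i))"

definition cinner :: "complex^'n \<Rightarrow> complex^'n \<Rightarrow> complex" where
  "cinner \<psi> \<phi> = (\<Sum>i\<in>UNIV. cnj (\<psi> $ i) * \<phi> $ i)"

text \<open>Generalized functional theory (V,H,iota,W); V is a euclidean space and
  V* is identified with V via the inner product: a functional alpha acts by v |-> alpha \<bullet> v.\<close>

definition functional_theory :: "('v::euclidean_space \<Rightarrow> complex^'n^'n) \<Rightarrow> complex^'n^'n \<Rightarrow> bool" where
  "functional_theory \<iota> W \<longleftrightarrow> linear \<iota> \<and> (\<forall>v. hermitian (\<iota> v)) \<and> hermitian W"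

definition abelian_theory :: "('v::euclidean_space \<Rightarrow> complex^'n^'n) \<Rightarrow> complex^'n^'n \<Rightarrow> bool" where
  "abelian_theory \<iota> W \<longleftrightarrow> functional_theory \<iota> W \<and> (\<forall>u v. \<iota> u ** \<iota> v = \<iota> v ** \<iota> u)"

definition weights :: "('v::euclidean_space \<Rightarrow> complex^'n^'n) \<Rightarrow> 'v set" where
  "weights \<iota> = {\<alpha>. \<exists>\<psi>. \<psi> \<noteq> 0 \<and> (\<forall>v. \<iota> v *v \<psi> = complex_of_real (\<alpha> \<bullet> v) *s \<psi>)}"

text \<open>The map iota^* restricted to pure states, lifted to nonzero vectors psi
  (the pure state [psi] = |psi><psi| / <psi,psi>):
  its value is the functional v |-> <psi, iota(v) psi> / <psi,psi>, represented in V.\<close>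

definition istar :: "('v::euclidean_space \<Rightarrow> complex^'n^'n) \<Rightarrow> complex^'n \<Rightarrow> 'v" where
  "istar \<iota> \<psi> = (\<Sum>b\<in>Basis. (Re (cinner \<psi> (\<iota> b *v \<psi>)) / Re (cinner \<psi> \<psi>)) *\<^sub>R b)"

definition aff_direction :: "'v::real_vector set \<Rightarrow> 'v set" where
  "aff_direction S = {x - y | x y. x \<in> affine hull S \<and> y \<in> affine hull S}"

text \<open>Since the quotient
  map (complex^'n - {0}) -> P is a surjective submersion, this is tested on the lift.\<close>

definition critical_value :: "('v::euclidean_space \<Rightarrow> complex^'n^'n) \<Rightarrow> 'v \<Rightarrow> bool" where
  "critical_value \<iota> \<rho> \<longleftrightarrow>
     (\<exists>\<psi>. \<psi> \<noteq> 0 \<and> istar \<iota> \<psi> = \<rho> \<and>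
        (\<forall>D. (istar \<iota> has_derivative D) (at \<psi>) \<longrightarrow> range D \<noteq> aff_direction (weights \<iota>)))"

end

theory Submission
  imports Defs
begin
lemma cscaleR: "r *\<^sub>R (z::complex) = of_real r * z"
  by (simp add: scaleR_conv_of_real)
lemma cinner_zero_right[simp]: "cinner x 0 = 0"
  by (simp add: cinner_def)
lemma cinner_zero_left[simp]: "cinner 0 x = 0"
  by (simp add: cinner_def)
lemma cinner_add_right: "cinner x (y + z) = cinner x y + cinner x z"
  by (simp add: cinner_def distrib_left sum.distrib)
lemma cinner_add_left: "cinner (x + y) z = cinner x z + cinner y z"
  by (simp add: cinner_def distrib_right sum.distrib)
lemma cinner_diff_right: "cinner x (y - z) = cinner x y - cinner x z"
  by (simp add: cinner_def right_diff_distrib sum_subtractf)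
lemma cinner_diff_left: "cinner (x - y) z = cinner x z - cinner y z"
  by (simp add: cinner_def left_diff_distrib sum_subtractf)
lemma cinner_smult_right: "cinner x (c *s y) = c * cinner x y"
  by (simp add: cinner_def sum_distrib_left algebra_simps)
lemma cinner_smult_left: "cinner (c *s x) y = cnj c * cinner x y"
  by (simp add: cinner_def sum_distrib_left algebra_simps)
lemma cinner_scaleR_right: "cinner x (r *\<^sub>R y) = of_real r * cinner x y"
  by (simp add: cinner_def sum_distrib_left algebra_simps cscaleR)
lemma cinner_scaleR_left: "cinner (r *\<^sub>R x) y = of_real r * cinner x y"
  by (simp add: cinner_def sum_distrib_left algebra_simps cscaleR)
lemma cinner_sum_right: "cinner x (\<Sum>i\<in>I. f i) = (\<Sum>i\<in>I. cinner x (f i))"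
  by (induction I rule: infinite_finite_induct) (auto simp: cinner_add_right)
lemma cinner_sum_left: "cinner (\<Sum>i\<in>I. f i) y = (\<Sum>i\<in>I. cinner (f i) y)"
  by (induction I rule: infinite_finite_induct) (auto simp: cinner_add_left)
lemma cinner_cnj: "cinner y x = cnj (cinner x y)"
  by (simp add: cinner_def mult.commute)
lemma Re_cinner: "Re (cinner x y) = x \<bullet> y"
  by (simp add: cinner_def inner_vec_def inner_complex_def Re_sum)
lemma cinner_self: "cinner x x = of_real ((norm x)^2)"
proof -
  have "Im (cinner x x) = 0"
    by (simp add: cinner_def Im_sum)
  moreover have "Re (cinner x x) = (norm x)^2"
    by (simp add: Re_cinner power2_norm_eq_inner)
  ultimately show ?thesis by (simp add: complex_eq_iff)
qed
lemma cinner_self_eq0: "cinner x x = 0 \<longleftrightarrow> x = 0"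
  by (simp add: cinner_self)

lemma mv_add: "A *v (x + y) = A *v x + A *v (y::complex^'n)"
  by (simp add: vec_eq_iff matrix_vector_mult_def distrib_left sum.distrib)
lemma mv_diff: "A *v (x - y) = A *v x - A *v (y::complex^'n)"
  by (simp add: vec_eq_iff matrix_vector_mult_def right_diff_distrib sum_subtractf)
lemma mv_smult: "A *v (c *s x) = c *s (A *v (x::complex^'n))"
  by (simp add: vec_eq_iff matrix_vector_mult_def sum_distrib_left algebra_simps)
lemma mv_scaleR: "A *v (r *\<^sub>R x) = r *\<^sub>R (A *v (x::complex^'n))"
  by (simp add: vec_eq_iff matrix_vector_mult_def sum_distrib_left algebra_simps cscaleR)
lemma mv_sum: "A *v (\<Sum>i\<in>I. f i) = (\<Sum>i\<in>I. A *v (f i::complex^'n))"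
  by (induction I rule: infinite_finite_induct) (auto simp: mv_add)
lemma mv_zero[simp]: "A *v (0::complex^'n) = 0"
  by (simp add: vec_eq_iff matrix_vector_mult_def)
lemma mvl_add: "(A + B) *v x = A *v x + B *v (x::complex^'n)"
  by (simp add: vec_eq_iff matrix_vector_mult_def distrib_right sum.distrib)
lemma mvl_scaleR: "(r *\<^sub>R A) *v x = r *\<^sub>R (A *v (x::complex^'n))"
  by (simp add: vec_eq_iff matrix_vector_mult_def sum_distrib_left algebra_simps cscaleR)
lemma mvl_zero[simp]: "0 *v x = (0::complex^'n)"
  by (simp add: vec_eq_iff matrix_vector_mult_def)
lemma mvl_sum: "(\<Sum>i\<in>I. f i) *v x = (\<Sum>i\<in>I. f i *v (x::complex^'n))"
  by (induction I rule: infinite_finite_induct) (auto simp: mvl_add)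

lemma herm_adj:
  assumes "hermitian A"
  shows "cinner x (A *v y) = cinner (A *v x) y"
proof -
  have "cinner x (A *v y) = (\<Sum>i\<in>UNIV. \<Sum>j\<in>UNIV. cnj (x$i) * (A$i$j * y$j))"
    by (simp add: cinner_def matrix_vector_mult_def sum_distrib_left)
  also have "\<dots> = (\<Sum>j\<in>UNIV. \<Sum>i\<in>UNIV. cnj (x$i) * (A$i$j * y$j))"
    by (rule sum.swap)
  also have "\<dots> = (\<Sum>j\<in>UNIV. \<Sum>i\<in>UNIV. cnj (A$j$i * x$i) * y$j)"
  proof -
    have "cnj (x$i) * (A$i$j * y$j) = cnj (A$j$i * x$i) * y$j" for i j
    proof -
      have "A$i$j = cnj (A$j$i)" using assms unfolding hermitian_def by blast
      then show ?thesis by (simp only: complex_cnj_mult mult_ac)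
    qed
    then show ?thesis by presburger
  qed
  also have "\<dots> = cinner (A *v x) y"
    by (simp add: cinner_def matrix_vector_mult_def sum_distrib_right cnj_sum)
  finally show ?thesis .
qed

lemma smult_scaleR: "(of_real r :: complex) *s x = r *\<^sub>R x"
  by (simp add: vec_eq_iff cscaleR)

lemma mv_linear: "linear (\<lambda>x::complex^'n. A *v x)"
  by (rule linearI) (simp_all add: mv_add mv_scaleR)

lemma mv_bl: "bounded_linear (\<lambda>x::complex^'n. A *v x)"
  using mv_linear linear_conv_bounded_linear by blast

lemma herm_eig:
  fixes A :: "complex^'n^'n"
  assumes herm: "hermitian A" and U: "subspace U" and inv: "\<forall>x\<in>U. A *v x \<in> U"
    and x0: "x0 \<in> U" "x0 \<noteq> 0"
  shows "\<exists>m::real. \<exists>\<psi>\<in>U. \<psi> \<noteq> 0 \<and> A *v \<psi> = m *\<^sub>R \<psi>"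
proof -
  define R where "R \<phi> = \<phi> \<bullet> (A *v \<phi>)" for \<phi> :: "complex^'n"
  have contR: "continuous_on K R" for K
    unfolding R_def
    by (intro continuous_on_inner continuous_on_id linear_continuous_on mv_bl)
  define K where "K = sphere 0 1 \<inter> U"
  have "compact K" unfolding K_def
    by (intro compact_Int_closed compact_sphere closed_subspace U)
  moreover have "(1 / norm x0) *\<^sub>R x0 \<in> K"
    using x0 U unfolding K_def by (auto simp: subspace_scale)
  hence "K \<noteq> {}" by blast
  ultimately obtain \<psi> where \<psi>K: "\<psi> \<in> K" and \<psi>max: "\<forall>y\<in>K. R y \<le> R \<psi>"
    using continuous_attains_sup[OF \<open>compact K\<close> \<open>K \<noteq> {}\<close> contR[of K]] by blast
  define m where "m = R \<psi>"
  have \<psi>U: "\<psi> \<in> U" and n\<psi>: "norm \<psi> = 1" using \<psi>K by (auto simp: K_def)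
  have Rscale: "R (r *\<^sub>R \<phi>) = r^2 * R \<phi>" for r \<phi>
    by (simp add: R_def mv_scaleR power2_eq_square)
  have le: "R \<phi> \<le> m * (norm \<phi>)^2" if "\<phi> \<in> U" for \<phi>
  proof (cases "\<phi> = 0")
    case True then show ?thesis by (simp add: R_def)
  next
    case False
    have "(1 / norm \<phi>) *\<^sub>R \<phi> \<in> K"
      using that False U unfolding K_def by (auto simp: subspace_scale)
    hence "R ((1 / norm \<phi>) *\<^sub>R \<phi>) \<le> m" using \<psi>max m_def by blast
    hence "R \<phi> / (norm \<phi>)^2 \<le> m" by (simp add: Rscale power_divide)
    thus ?thesis using False by (simp add: divide_le_eq mult.commute)
  qed
  define B where "B \<phi> = A *v \<phi> - m *\<^sub>R \<phi>" for \<phi>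
  define w where "w = B \<psi>"
  have wU: "w \<in> U" unfolding w_def B_def
    using U inv \<psi>U by (simp add: subspace_diff subspace_scale)
  have Badd: "B (x + r *\<^sub>R y) = B x + r *\<^sub>R B y" for x y r
    by (simp add: B_def mv_add mv_scaleR algebra_simps)
  have Bsym: "x \<bullet> B y = B x \<bullet> y" for x y
  proof -
    have "cinner x (B y) = cinner (B x) y"
      by (simp add: B_def cinner_diff_right cinner_diff_left cinner_scaleR_right
          cinner_scaleR_left herm_adj[OF herm])
    thus ?thesis by (metis Re_cinner)
  qed
  have Q: "(\<psi> + t *\<^sub>R w) \<bullet> B (\<psi> + t *\<^sub>R w) = 2 * t * (w \<bullet> w) + t^2 * (w \<bullet> B w)" for t
  proof -
    have "\<psi> \<bullet> B \<psi> = 0"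
      using n\<psi> by (simp add: B_def R_def m_def inner_diff_right power2_norm_eq_inner[symmetric])
    moreover have "\<psi> \<bullet> B w = w \<bullet> w" using Bsym[of \<psi> w] by (simp add: w_def)
    moreover have "w \<bullet> B \<psi> = w \<bullet> w" by (simp add: w_def)
    moreover have "(\<psi> + t *\<^sub>R w) \<bullet> B (\<psi> + t *\<^sub>R w) = \<psi> \<bullet> B \<psi> + t * (\<psi> \<bullet> B w) + t * (w \<bullet> B \<psi>) + t^2 * (w \<bullet> B w)"
      by (simp only: Badd inner_add_left inner_add_right inner_scaleR_left inner_scaleR_right power2_eq_square) (simp add: algebra_simps)
    ultimately show ?thesis by simp
  qed
  have Qle: "2 * t * (w \<bullet> w) + t^2 * (w \<bullet> B w) \<le> 0" for t
  proof -
    have "\<psi> + t *\<^sub>R w \<in> U" using U \<psi>U wU by (simp add: subspace_add subspace_scale)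
    from le[OF this] have "R (\<psi> + t *\<^sub>R w) - m * (norm (\<psi> + t *\<^sub>R w))^2 \<le> 0" by simp
    moreover have "R (\<psi> + t *\<^sub>R w) - m * (norm (\<psi> + t *\<^sub>R w))^2 = (\<psi> + t *\<^sub>R w) \<bullet> B (\<psi> + t *\<^sub>R w)"
      by (simp add: R_def B_def inner_diff_right power2_norm_eq_inner)
    ultimately show ?thesis using Q by simp
  qed
  have "w = 0"
  proof (rule ccontr)
    assume "w \<noteq> 0"
    define a where "a = w \<bullet> w"
    define q where "q = w \<bullet> B w"
    have a: "a > 0" using \<open>w \<noteq> 0\<close> by (simp add: a_def)
    define t where "t = a / (\<bar>q\<bar> + 1)"
    have t: "t > 0" using a by (simp add: t_def)
    have "t * \<bar>q\<bar> < a" using a by (simp add: t_def field_simps)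
    moreover have "t * (- \<bar>q\<bar>) \<le> t * q" using t by (intro mult_left_mono) auto
    ultimately have "t * q > - a" by simp
    hence "t * (2 * a + t * q) > 0" using t a by (intro mult_pos_pos) auto
    moreover have "2 * t * a + t^2 * q \<le> 0" using Qle[of t] by (simp add: a_def q_def)
    ultimately show False by (simp add: power2_eq_square algebra_simps)
  qed
  hence "A *v \<psi> = m *\<^sub>R \<psi>" by (simp add: w_def B_def)
  moreover have "\<psi> \<noteq> 0" using n\<psi> by auto
  ultimately show ?thesis using \<psi>U by blast
qed

definition evec :: "('v::euclidean_space \<Rightarrow> complex^'n^'n) \<Rightarrow> complex^'n \<Rightarrow> 'v \<Rightarrow> bool" where
  "evec \<iota> e \<alpha> \<longleftrightarrow> (\<forall>v. \<iota> v *v e = (\<alpha> \<bullet> v) *\<^sub>R e)"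

lemma eigsp_subspace: "subspace {x::complex^'n. A *v x = m *\<^sub>R x}"
  by (auto simp: subspace_def mv_add mv_scaleR scaleR_add_right)

lemma common_evec:
  fixes \<iota> :: "'v::euclidean_space \<Rightarrow> complex^'n^'n"
  assumes ab: "abelian_theory \<iota> W" and U: "subspace U" and inv: "\<forall>v. \<forall>x\<in>U. \<iota> v *v x \<in> U"
    and x0: "x0 \<in> U" "x0 \<noteq> 0"
  shows "\<exists>\<psi>\<in>U. \<psi> \<noteq> 0 \<and> (\<exists>\<alpha>. evec \<iota> \<psi> \<alpha>)"
proof -
  have herm: "\<And>v. hermitian (\<iota> v)" and lin: "linear \<iota>"
    and comm: "\<And>u v. \<iota> u ** \<iota> v = \<iota> v ** \<iota> u"
    using ab by (auto simp: abelian_theory_def functional_theory_def)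
  have main: "finite B \<Longrightarrow> \<exists>U'. U' \<subseteq> U \<and> subspace U' \<and> (\<forall>v. \<forall>x\<in>U'. \<iota> v *v x \<in> U')
      \<and> (\<exists>x\<in>U'. x \<noteq> 0) \<and> (\<forall>b\<in>B. \<exists>m::real. \<forall>x\<in>U'. \<iota> b *v x = m *\<^sub>R x)" for B
  proof (induction B rule: finite_induct)
    case empty
    then show ?case using U inv x0 by blast
  next
    case (insert b B)
    then obtain U' where U': "U' \<subseteq> U" "subspace U'" "\<forall>v. \<forall>x\<in>U'. \<iota> v *v x \<in> U'"
      "\<exists>x\<in>U'. x \<noteq> 0" "\<forall>b\<in>B. \<exists>m::real. \<forall>x\<in>U'. \<iota> b *v x = m *\<^sub>R x" by blast
    obtain m \<psi> where m: "\<psi> \<in> U'" "\<psi> \<noteq> 0" "\<iota> b *v \<psi> = m *\<^sub>R \<psi>"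
      using herm_eig[OF herm U'(2)] U'(3,4) by blast
    define U'' where "U'' = U' \<inter> {x. \<iota> b *v x = m *\<^sub>R x}"
    have "subspace U''" unfolding U''_def by (intro subspace_inter U'(2) eigsp_subspace)
    moreover have "\<forall>v. \<forall>x\<in>U''. \<iota> v *v x \<in> U''"
    proof (intro allI ballI)
      fix v x assume x: "x \<in> U''"
      have "\<iota> b *v (\<iota> v *v x) = \<iota> v *v (\<iota> b *v x)"
        by (simp add: matrix_vector_mul_assoc comm)
      also have "\<dots> = m *\<^sub>R (\<iota> v *v x)" using x by (simp add: U''_def mv_scaleR)
      finally show "\<iota> v *v x \<in> U''" using x U'(3) by (simp add: U''_def)
    qed
    moreover have "\<exists>x\<in>U''. x \<noteq> 0" using m by (auto simp: U''_def)
    moreover have "\<forall>b'\<in>insert b B. \<exists>m::real. \<forall>x\<in>U''. \<iota> b' *v x = m *\<^sub>R x"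
      using U'(5) by (auto simp: U''_def)
    moreover have "U'' \<subseteq> U" using U'(1) by (auto simp: U''_def)
    ultimately show ?case by blast
  qed
  obtain U' where U': "U' \<subseteq> U" "\<exists>x\<in>U'. x \<noteq> 0"
      "\<forall>b\<in>Basis. \<exists>m::real. \<forall>x\<in>U'. \<iota> b *v x = m *\<^sub>R x"
    using main[OF finite_Basis] by blast
  then obtain \<psi> where \<psi>: "\<psi> \<in> U'" "\<psi> \<noteq> 0" by blast
  define m where "m b = (SOME m::real. \<forall>x\<in>U'. \<iota> b *v x = m *\<^sub>R x)" for b
  have mb: "\<iota> b *v \<psi> = m b *\<^sub>R \<psi>" if "b \<in> Basis" for b
  proof -
    have ex: "\<exists>mm::real. \<forall>x\<in>U'. \<iota> b *v x = mm *\<^sub>R x" using U'(3) that by blast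
    have "\<forall>x\<in>U'. \<iota> b *v x = m b *\<^sub>R x"
      unfolding m_def by (rule someI_ex[OF ex])
    thus ?thesis using \<psi> by blast
  qed
  define \<alpha> where "\<alpha> = (\<Sum>b\<in>Basis. m b *\<^sub>R b)"
  have "evec \<iota> \<psi> \<alpha>"
    unfolding evec_def
  proof
    fix v
    have "\<iota> v = (\<Sum>b\<in>Basis. (v \<bullet> b) *\<^sub>R \<iota> b)"
      by (subst euclidean_representation[symmetric, of v]) (simp add: linear_sum[OF lin] linear_scale[OF lin])
    hence "\<iota> v *v \<psi> = (\<Sum>b\<in>Basis. (v \<bullet> b) *\<^sub>R (\<iota> b *v \<psi>))"
      by (simp add: mvl_sum mvl_scaleR)
    also have "\<dots> = (\<Sum>b\<in>Basis. ((v \<bullet> b) * m b) *\<^sub>R \<psi>)"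
      by (intro sum.cong refl) (simp add: mb)
    also have "\<dots> = (\<alpha> \<bullet> v) *\<^sub>R \<psi>"
      by (simp add: \<alpha>_def inner_sum_left scaleR_sum_left[symmetric] inner_commute[of v] mult.commute)
    finally show "\<iota> v *v \<psi> = (\<alpha> \<bullet> v) *\<^sub>R \<psi>" .
  qed
  thus ?thesis using \<psi> U'(1) by blast
qed

definition onb :: "('v::euclidean_space \<Rightarrow> complex^'n^'n) \<Rightarrow> (complex^'n) set \<Rightarrow> bool" where
  "onb \<iota> F \<longleftrightarrow> finite F \<and> (\<forall>e\<in>F. cinner e e = 1 \<and> (\<exists>\<alpha>. evec \<iota> e \<alpha>))
     \<and> (\<forall>e\<in>F. \<forall>e'\<in>F. e \<noteq> e' \<longrightarrow> cinner e e' = 0)"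

lemma onb_card:
  fixes F :: "(complex^'n) set"
  assumes "onb \<iota> F" shows "card F \<le> DIM(complex^'n)"
proof -
  have "e \<bullet> e' = 0" if "e \<in> F" "e' \<in> F" "e \<noteq> e'" for e e'
  proof -
    have "cinner e e' = 0" using assms that unfolding onb_def by blast
    thus ?thesis using Re_cinner[of e e'] by simp
  qed
  hence "pairwise orthogonal F"
    unfolding pairwise_def orthogonal_def by blast
  moreover have "0 \<notin> F"
  proof
    assume "0 \<in> F"
    moreover have "\<forall>e\<in>F. cinner e e = 1" using assms unfolding onb_def by blast
    ultimately have "cinner (0::complex^'n) 0 = 1" by blast
    thus False by simp
  qed
  ultimately have "independent F" by (rule pairwise_orthogonal_independent)
  thus ?thesis using independent_bound by blast
qed

lemma onb_sum_delta:
  assumes "onb \<iota> F" "e' \<in> F"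
  shows "(\<Sum>e\<in>F. f e * cinner e' e) = f e'"
proof -
  have fin: "finite F" using assms by (simp add: onb_def)
  have "(\<Sum>e\<in>F. f e * cinner e' e) = f e' * cinner e' e' + (\<Sum>e\<in>F - {e'}. f e * cinner e' e)"
    using fin assms(2) by (simp add: sum.remove)
  also have "(\<Sum>e\<in>F - {e'}. f e * cinner e' e) = 0"
    using assms unfolding onb_def by (intro sum.neutral) auto
  finally show ?thesis using assms unfolding onb_def by simp
qed

lemma exists_onb:
  fixes \<iota> :: "'v::euclidean_space \<Rightarrow> complex^'n^'n"
  assumes ab: "abelian_theory \<iota> W"
  shows "\<exists>F. onb \<iota> F \<and> (\<forall>\<phi>. \<phi> = (\<Sum>e\<in>F. cinner e \<phi> *s e))"
proof -
  have herm: "\<And>v. hermitian (\<iota> v)"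
    using ab by (auto simp: abelian_theory_def functional_theory_def)
  have "onb \<iota> {}" by (simp add: onb_def)
  moreover have "\<forall>F. onb \<iota> F \<longrightarrow> card F < DIM(complex^'n) + 1"
    using onb_card by (metis less_Suc_eq_le Suc_eq_plus1)
  ultimately obtain F where F: "onb \<iota> F" and Fmax: "\<And>G. onb \<iota> G \<Longrightarrow> card G \<le> card F"
    using ex_has_greatest_nat[of "onb \<iota>" "{}" card "DIM(complex^'n) + 1"] by blast
  have fin: "finite F" using F by (simp add: onb_def)
  have "\<phi> = (\<Sum>e\<in>F. cinner e \<phi> *s e)" for \<phi>
  proof (rule ccontr)
    assume ne: "\<phi> \<noteq> (\<Sum>e\<in>F. cinner e \<phi> *s e)"
    define r where "r = \<phi> - (\<Sum>e\<in>F. cinner e \<phi> *s e)"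
    have r0: "r \<noteq> 0" using ne by (simp add: r_def)
    define U where "U = {x. \<forall>e\<in>F. cinner e x = 0}"
    have U: "subspace U"
      by (auto simp: subspace_def U_def cinner_add_right cinner_scaleR_right)
    have inv: "\<forall>v. \<forall>x\<in>U. \<iota> v *v x \<in> U"
    proof (intro allI ballI)
      fix v x assume x: "x \<in> U"
      show "\<iota> v *v x \<in> U" unfolding U_def
      proof (intro CollectI ballI)
        fix e assume e: "e \<in> F"
        then obtain \<alpha> where "evec \<iota> e \<alpha>" using F by (auto simp: onb_def)
        hence "cinner e (\<iota> v *v x) = cinner ((\<alpha> \<bullet> v) *\<^sub>R e) x"
          by (simp add: herm_adj[OF herm] evec_def)
        also have "\<dots> = 0" using x e by (simp add: U_def cinner_scaleR_left)
        finally show "cinner e (\<iota> v *v x) = 0" .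
      qed
    qed
    have rU: "r \<in> U"
      unfolding U_def
    proof (intro CollectI ballI)
      fix e' assume e': "e' \<in> F"
      have "cinner e' r = cinner e' \<phi> - (\<Sum>e\<in>F. cinner e \<phi> * cinner e' e)"
        by (simp add: r_def cinner_diff_right cinner_sum_right cinner_smult_right)
      also have "\<dots> = 0" using onb_sum_delta[OF F e'] by simp
      finally show "cinner e' r = 0" .
    qed
    obtain \<psi> \<alpha> where \<psi>: "\<psi> \<in> U" "\<psi> \<noteq> 0" "evec \<iota> \<psi> \<alpha>"
      using common_evec[OF ab U inv rU r0] by blast
    define e' where "e' = (1 / norm \<psi>) *\<^sub>R \<psi>"
    have e'U: "e' \<in> U" using \<psi> U by (simp add: e'_def subspace_scale)
    have e'1: "cinner e' e' = 1"
      using \<psi> by (simp add: e'_def cinner_scaleR_left cinner_scaleR_right cinner_self power2_eq_square)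
    have e'ev: "evec \<iota> e' \<alpha>"
      using \<psi>(3) by (simp add: evec_def e'_def mv_scaleR)
    have e'F: "e' \<notin> F" using e'U e'1 by (auto simp: U_def)
    have o1: "cinner e e' = 0" if "e \<in> F" for e using e'U that by (simp add: U_def)
    have o2: "cinner e' e = 0" if "e \<in> F" for e using o1[OF that] cinner_cnj[of e' e] by simp
    have "onb \<iota> (insert e' F)"
      using F e'1 e'ev o1 o2 unfolding onb_def by auto
    hence "card (insert e' F) \<le> card F" by (rule Fmax)
    thus False using fin e'F by simp
  qed
  thus ?thesis using F by blast
qed

lemma vec_eq_by_inner:
  fixes x y :: "'a::real_inner"
  assumes "\<And>u. u \<bullet> x = u \<bullet> y" shows "x = y"
proof -
  have "(x - y) \<bullet> (x - y) = 0" using assms[of "x - y"] by (simp add: inner_diff_right)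
  thus ?thesis by simp
qed

lemma cinner_bl: "bounded_linear (\<lambda>\<phi>::complex^'n. cinner e \<phi>)"
proof -
  have "linear (\<lambda>\<phi>::complex^'n. cinner e \<phi>)"
    by (rule linearI) (simp_all add: cinner_add_right cinner_scaleR_right cscaleR)
  thus ?thesis using linear_conv_bounded_linear by blast
qed

lemma mcnj: "z * cnj z = (complex_of_real (cmod z))^2"
  by (metis complex_norm_square of_real_power)

locale onbsetup =
  fixes \<iota> :: "'v::euclidean_space \<Rightarrow> complex^'n^'n" and F :: "(complex^'n) set"
  assumes lin: "linear \<iota>" and herm: "\<And>v. hermitian (\<iota> v)"
    and onb: "onb \<iota> F" and dec: "\<And>\<phi>. \<phi> = (\<Sum>e\<in>F. cinner e \<phi> *s e)"
begin

definition lam :: "complex^'n \<Rightarrow> 'v" where "lam e = (SOME \<alpha>. evec \<iota> e \<alpha>)"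
definition P :: "complex^'n \<Rightarrow> complex^'n \<Rightarrow> real" where "P e \<phi> = (cmod (cinner e \<phi>))^2"

lemma finF: "finite F" using onb by (simp add: onb_def)
lemma unit: "e \<in> F \<Longrightarrow> cinner e e = 1" using onb by (simp add: onb_def)
lemma orth: "e \<in> F \<Longrightarrow> e' \<in> F \<Longrightarrow> e \<noteq> e' \<Longrightarrow> cinner e e' = 0" using onb by (simp add: onb_def)
lemma lam_ev: "e \<in> F \<Longrightarrow> evec \<iota> e (lam e)"
  unfolding lam_def using onb by (auto simp: onb_def intro: someI_ex)
lemma P_nonneg: "P e \<phi> \<ge> 0" by (simp add: P_def)

lemma norm_sum: "(norm \<phi>)^2 = (\<Sum>e\<in>F. P e \<phi>)"
proof -
  have "cinner \<phi> \<phi> = cinner \<phi> (\<Sum>e\<in>F. cinner e \<phi> *s e)" by (subst dec) (rule refl)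
  also have "\<dots> = (\<Sum>e\<in>F. cinner e \<phi> * cnj (cinner e \<phi>))"
    by (simp add: cinner_sum_right cinner_smult_right cinner_cnj[of \<phi>])
  also have "\<dots> = (\<Sum>e\<in>F. of_real (P e \<phi>))"
    by (simp add: P_def mcnj)
  finally have "Re (cinner \<phi> \<phi>) = (\<Sum>e\<in>F. P e \<phi>)" by (simp add: Re_sum)
  thus ?thesis by (simp add: Re_cinner power2_norm_eq_inner)
qed

lemma quad: "Re (cinner \<phi> (\<iota> b *v \<phi>)) = (\<Sum>e\<in>F. (lam e \<bullet> b) * P e \<phi>)"
proof -
  have "\<iota> b *v \<phi> = \<iota> b *v (\<Sum>e\<in>F. cinner e \<phi> *s e)" by (subst dec) (rule refl)
  also have "\<dots> = (\<Sum>e\<in>F. cinner e \<phi> *s ((lam e \<bullet> b) *\<^sub>R e))"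
    by (simp add: mv_sum mv_smult) (intro sum.cong refl, use lam_ev in \<open>simp add: evec_def\<close>)
  finally have "cinner \<phi> (\<iota> b *v \<phi>) = (\<Sum>e\<in>F. cinner e \<phi> * of_real (lam e \<bullet> b) * cnj (cinner e \<phi>))"
    by (simp add: cinner_sum_right cinner_smult_right cinner_scaleR_right cinner_cnj[of \<phi>] mult.assoc)
  also have "\<dots> = (\<Sum>e\<in>F. of_real ((lam e \<bullet> b) * P e \<phi>))"
    by (intro sum.cong refl) (simp add: P_def mcnj mult.commute mult.left_commute)
  finally show ?thesis by (simp add: Re_sum)
qed

lemma istar_formula: "istar \<iota> \<phi> = (1 / (norm \<phi>)^2) *\<^sub>R (\<Sum>e\<in>F. P e \<phi> *\<^sub>R lam e)"
proof -
  have N: "Re (cinner \<phi> \<phi>) = (norm \<phi>)^2" by (simp add: cinner_self)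
  have "istar \<iota> \<phi> = (\<Sum>b\<in>Basis. ((\<Sum>e\<in>F. (lam e \<bullet> b) * P e \<phi>) / (norm \<phi>)^2) *\<^sub>R b)"
    unfolding istar_def quad N ..
  also have "\<dots> = (\<Sum>b\<in>Basis. (((1 / (norm \<phi>)^2) *\<^sub>R (\<Sum>e\<in>F. P e \<phi> *\<^sub>R lam e)) \<bullet> b) *\<^sub>R b)"
    by (intro sum.cong refl) (simp add: inner_sum_left mult.commute)
  also have "\<dots> = (1 / (norm \<phi>)^2) *\<^sub>R (\<Sum>e\<in>F. P e \<phi> *\<^sub>R lam e)"
    by (rule euclidean_representation)
  finally show ?thesis .
qed

lemma weights_eq: "weights \<iota> = lam ` F"
proof
  show "lam ` F \<subseteq> weights \<iota>"
  proof
    fix \<alpha> assume "\<alpha> \<in> lam ` F"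
    then obtain e where e: "e \<in> F" "\<alpha> = lam e" by blast
    have "e \<noteq> 0" using unit[OF e(1)] by auto
    moreover have "\<forall>v. \<iota> v *v e = complex_of_real (\<alpha> \<bullet> v) *s e"
      using lam_ev[OF e(1)] e(2) by (simp add: evec_def smult_scaleR)
    ultimately show "\<alpha> \<in> weights \<iota>" unfolding weights_def by blast
  qed
next
  show "weights \<iota> \<subseteq> lam ` F"
  proof
    fix \<alpha> assume "\<alpha> \<in> weights \<iota>"
    then obtain \<xi> where \<xi>: "\<xi> \<noteq> 0" "\<And>v. \<iota> v *v \<xi> = (\<alpha> \<bullet> v) *\<^sub>R \<xi>"
      unfolding weights_def by (auto simp: smult_scaleR)
    have "\<exists>e\<in>F. cinner e \<xi> \<noteq> 0"
    proof (rule ccontr)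
      assume "\<not> ?thesis"
      hence "(\<Sum>e\<in>F. cinner e \<xi> *s e) = 0" by simp
      thus False using dec[of \<xi>] \<xi>(1) by simp
    qed
    then obtain e where e: "e \<in> F" "cinner e \<xi> \<noteq> 0" by blast
    have lv: "lam e \<bullet> v = \<alpha> \<bullet> v" for v
    proof -
      have "cinner e (\<iota> v *v \<xi>) = of_real (\<alpha> \<bullet> v) * cinner e \<xi>"
        by (simp add: \<xi>(2) cinner_scaleR_right)
      moreover have "cinner e (\<iota> v *v \<xi>) = of_real (lam e \<bullet> v) * cinner e \<xi>"
        using lam_ev[OF e(1)] by (simp add: herm_adj[OF herm] evec_def cinner_scaleR_left)
      ultimately have "of_real (lam e \<bullet> v) = (of_real (\<alpha> \<bullet> v) :: complex)"
        using e(2) by simp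
      thus ?thesis by simp
    qed
    have "lam e = \<alpha>" by (rule vec_eq_by_inner) (metis inner_commute lv)
    thus "\<alpha> \<in> lam ` F" using e by blast
  qed
qed

lemma istar_hull:
  assumes "\<phi> \<noteq> 0"
  shows "istar \<iota> \<phi> \<in> convex hull (lam ` {e\<in>F. P e \<phi> \<noteq> 0})"
proof -
  define G where "G = {e\<in>F. P e \<phi> \<noteq> 0}"
  have finG: "finite G" using finF by (simp add: G_def)
  have N: "(norm \<phi>)^2 > 0" using assms by simp
  have "istar \<iota> \<phi> = (1 / (norm \<phi>)^2) *\<^sub>R (\<Sum>e\<in>G. P e \<phi> *\<^sub>R lam e)"
    unfolding istar_formula G_def
    by (rule arg_cong[where f="\<lambda>x. _ *\<^sub>R x"], rule sum.mono_neutral_right) (auto simp: finF)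
  also have "\<dots> = (\<Sum>e\<in>G. (P e \<phi> / (norm \<phi>)^2) *\<^sub>R lam e)"
    by (simp add: scaleR_sum_right)
  also have "\<dots> \<in> convex hull (lam ` G)"
  proof (rule convex_sum[OF finG convex_convex_hull])
    have "(\<Sum>e\<in>G. P e \<phi>) = (norm \<phi>)^2"
      unfolding norm_sum G_def by (rule sum.mono_neutral_left) (auto simp: finF)
    thus "(\<Sum>e\<in>G. P e \<phi> / (norm \<phi>)^2) = 1" using N by (simp add: sum_divide_distrib[symmetric])
    show "\<And>i. i \<in> G \<Longrightarrow> 0 \<le> P i \<phi> / (norm \<phi>)^2" by (simp add: P_nonneg)
    show "\<And>i. i \<in> G \<Longrightarrow> lam i \<in> convex hull (lam ` G)" by (simp add: hull_inc)
  qed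
  finally show ?thesis by (simp add: G_def)
qed

lemma istar_diff: "istar \<iota> differentiable (at \<psi>)" if "\<psi> \<noteq> 0"
proof -
  have eq: "istar \<iota> = (\<lambda>\<phi>. inverse (\<phi> \<bullet> \<phi>) *\<^sub>R (\<Sum>e\<in>F. ((cinner e \<phi>) \<bullet> (cinner e \<phi>)) *\<^sub>R lam e))"
    by (rule ext) (simp add: istar_formula P_def power2_norm_eq_inner divide_inverse)
  show ?thesis unfolding eq
    using that
    by (intro differentiable_scaleR differentiable_inverse differentiable_sum differentiable_inner
        bounded_linear_imp_differentiable cinner_bl bounded_linear_ident finF ballI differentiable_const) auto
qed

end

lemma dir_deriv:
  fixes f :: "'a::real_normed_vector \<Rightarrow> 'b::real_inner"
  assumes "(f has_derivative D) (at \<psi>)"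
  shows "((\<lambda>t. u \<bullet> f (\<psi> + t *\<^sub>R h)) has_real_derivative (u \<bullet> D h)) (at 0)"
proof -
  have l: "((\<lambda>t::real. \<psi> + t *\<^sub>R h) has_derivative (\<lambda>t. t *\<^sub>R h)) (at 0)"
    by (auto intro!: derivative_eq_intros)
  have a: "(f has_derivative D) (at ((\<lambda>t::real. \<psi> + t *\<^sub>R h) 0))" using assms by simp
  have "((\<lambda>t. f (\<psi> + t *\<^sub>R h)) has_derivative (\<lambda>t. D (t *\<^sub>R h))) (at 0)"
    using has_derivative_compose[OF l a] by simp
  then have "((\<lambda>t. u \<bullet> f (\<psi> + t *\<^sub>R h)) has_derivative (\<lambda>t. u \<bullet> D (t *\<^sub>R h))) (at 0)"
    by (rule has_derivative_inner_right)
  moreover have "(\<lambda>t. u \<bullet> D (t *\<^sub>R h)) = (\<lambda>t. (u \<bullet> D h) * t)"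
    using linear_scale[OF has_derivative_linear[OF assms]] by (simp add: mult.commute)
  ultimately show ?thesis by (simp add: has_field_derivative_def)
qed

lemma inner_line: "(\<psi> + t *\<^sub>R h) \<bullet> (\<psi> + t *\<^sub>R h) = \<psi> \<bullet> \<psi> + 2 * t * (\<psi> \<bullet> h) + t^2 * (h \<bullet> h)"
  by (simp add: inner_add_left inner_add_right inner_commute power2_eq_square algebra_simps)

lemma deriv_quot0:
  fixes a b q Q c :: real
  assumes "a \<noteq> 0"
  shows "((\<lambda>t. (t^2 * Q + c * (a + 2 * t * b + t^2 * q)) / (a + 2 * t * b + t^2 * q)) has_real_derivative 0) (at 0)"
  using assms by (auto intro!: derivative_eq_intros simp: field_simps)

lemma deriv_quot1:
  fixes X N0 p w :: real
  assumes "N0 \<noteq> 0"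
  shows "((\<lambda>t. (X + ((1 + t)^2 - 1) * p * w) / (N0 + ((1 + t)^2 - 1) * p)) has_real_derivative
     ((2 * p * w) * N0 - X * (2 * p)) / N0^2) (at 0)"
  using assms by (auto intro!: derivative_eq_intros simp: field_simps power2_eq_square)

context onbsetup
begin

lemma cinner_line: "cinner e (\<psi> + t *\<^sub>R h) = cinner e \<psi> + of_real t * cinner e h"
  by (simp add: cinner_add_right cinner_scaleR_right)

lemma u_istar: "u \<bullet> istar \<iota> \<phi> = (\<Sum>e\<in>F. P e \<phi> * (u \<bullet> lam e)) / (norm \<phi>)^2"
  by (simp add: istar_formula inner_sum_right)

lemma dir_component:
  assumes D: "(istar \<iota> has_derivative D) (at \<psi>)" and \<psi>0: "\<psi> \<noteq> 0" and e: "e \<in> F"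
    and p0: "P e \<psi> \<noteq> 0"
  shows "lam e - istar \<iota> \<psi> \<in> range D"
proof -
  define h where "h = cinner e \<psi> *s e"
  define N0 where "N0 = (norm \<psi>)^2"
  define p where "p = P e \<psi>"
  have N0: "N0 > 0" using \<psi>0 by (simp add: N0_def)
  have p: "p > 0" using p0 P_nonneg[of e \<psi>] by (simp add: p_def)
  have ch: "cinner e' h = (if e' = e then cinner e \<psi> else 0)" if "e' \<in> F" for e'
    using that e unit orth by (auto simp: h_def cinner_smult_right)
  have Pline: "P e' (\<psi> + t *\<^sub>R h) = P e' \<psi> + (if e' = e then ((1 + t)^2 - 1) * p else 0)"
    if "e' \<in> F" for e' t
  proof (cases "e' = e")
    case True
    have "cinner e' (\<psi> + t *\<^sub>R h) = of_real (1 + t) * cinner e \<psi>"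
      using True ch[OF that] by (simp add: cinner_line algebra_simps)
    moreover have "(cmod (1 + complex_of_real t))^2 = (1 + t)^2"
      by (metis of_real_1 of_real_add norm_of_real power2_abs)
    ultimately have "P e' (\<psi> + t *\<^sub>R h) = (1 + t)^2 * p"
      by (simp add: P_def p_def True norm_mult power_mult_distrib)
    thus ?thesis using True by (simp add: p_def algebra_simps)
  next
    case False
    thus ?thesis using ch[OF that] by (simp add: P_def cinner_line)
  qed
  have Psum: "(\<Sum>e'\<in>F. P e' (\<psi> + t *\<^sub>R h) * g e') = (\<Sum>e'\<in>F. P e' \<psi> * g e') + ((1 + t)^2 - 1) * p * g e"
    for t and g :: "complex^'n \<Rightarrow> real"
  proof -
    have "(\<Sum>e'\<in>F. P e' (\<psi> + t *\<^sub>R h) * g e') = (\<Sum>e'\<in>F. P e' \<psi> * g e' + (if e' = e then ((1 + t)^2 - 1) * p * g e else 0))"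
      by (intro sum.cong refl) (simp add: Pline algebra_simps)
    also have "\<dots> = (\<Sum>e'\<in>F. P e' \<psi> * g e') + ((1 + t)^2 - 1) * p * g e"
      using e finF by (simp add: sum.distrib)
    finally show ?thesis .
  qed
  have "u \<bullet> D h = u \<bullet> ((2 * p / N0) *\<^sub>R (lam e - istar \<iota> \<psi>))" for u
  proof -
    define X where "X = (\<Sum>e'\<in>F. P e' \<psi> * (u \<bullet> lam e'))"
    define w where "w = u \<bullet> lam e"
    have eqf: "u \<bullet> istar \<iota> (\<psi> + t *\<^sub>R h) = (X + ((1 + t)^2 - 1) * p * w) / (N0 + ((1 + t)^2 - 1) * p)" for t
    proof -
      have "(norm (\<psi> + t *\<^sub>R h))^2 = (\<Sum>e'\<in>F. P e' (\<psi> + t *\<^sub>R h) * 1)" by (simp add: norm_sum)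
      also have "\<dots> = N0 + ((1 + t)^2 - 1) * p" by (subst Psum) (simp add: N0_def norm_sum)
      finally show ?thesis unfolding u_istar by (simp add: Psum X_def w_def)
    qed
    have d1: "((\<lambda>t. u \<bullet> istar \<iota> (\<psi> + t *\<^sub>R h)) has_real_derivative (u \<bullet> D h)) (at 0)"
      by (rule dir_deriv[OF D])
    have d2: "((\<lambda>t. u \<bullet> istar \<iota> (\<psi> + t *\<^sub>R h)) has_real_derivative ((2 * p * w) * N0 - X * (2 * p)) / N0^2) (at 0)"
      unfolding eqf using N0 by (intro deriv_quot1) simp
    have "u \<bullet> D h = ((2 * p * w) * N0 - X * (2 * p)) / N0^2" using DERIV_unique[OF d1 d2] .
    also have "\<dots> = (2 * p / N0) * (w - X / N0)" using N0 by (simp add: field_simps power2_eq_square)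
    also have "X / N0 = u \<bullet> istar \<iota> \<psi>" by (simp add: u_istar X_def N0_def)
    finally show ?thesis by (simp add: w_def inner_diff_right)
  qed
  hence Dh: "D h = (2 * p / N0) *\<^sub>R (lam e - istar \<iota> \<psi>)" by (rule vec_eq_by_inner)
  have "D ((N0 / (2 * p)) *\<^sub>R h) = (N0 / (2 * p)) *\<^sub>R D h"
    by (rule linear_scale[OF has_derivative_linear[OF D]])
  also have "\<dots> = lam e - istar \<iota> \<psi>" using N0 p by (simp add: Dh)
  finally show ?thesis by (metis rangeI)
qed

lemma dir_zero:
  assumes D: "(istar \<iota> has_derivative D) (at \<psi>)" and n1: "norm \<psi> = 1"
    and E: "\<And>e. e \<in> F \<Longrightarrow> u \<bullet> lam e \<noteq> c \<Longrightarrow> cinner e \<psi> = 0"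
  shows "u \<bullet> D h = 0"
proof -
  define Q where "Q = (\<Sum>e\<in>F. P e h * (u \<bullet> lam e - c))"
  define N where "N t = (\<psi> + t *\<^sub>R h) \<bullet> (\<psi> + t *\<^sub>R h)" for t
  have trm: "P e (\<psi> + t *\<^sub>R h) * (u \<bullet> lam e) = t^2 * (P e h * (u \<bullet> lam e - c)) + c * P e (\<psi> + t *\<^sub>R h)"
    if "e \<in> F" for e t
  proof (cases "u \<bullet> lam e = c")
    case True thus ?thesis by simp
  next
    case False
    hence "cinner e \<psi> = 0" using E that by blast
    hence "P e (\<psi> + t *\<^sub>R h) = t^2 * P e h"
      by (simp add: P_def cinner_line norm_mult power_mult_distrib)
    thus ?thesis by (simp add: algebra_simps)
  qed
  have eqf: "u \<bullet> istar \<iota> (\<psi> + t *\<^sub>R h) = (t^2 * Q + c * N t) / N t" for t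
  proof -
    have Nt: "N t = (\<Sum>e\<in>F. P e (\<psi> + t *\<^sub>R h))" by (simp add: N_def norm_sum[symmetric] power2_norm_eq_inner)
    have "(\<Sum>e\<in>F. P e (\<psi> + t *\<^sub>R h) * (u \<bullet> lam e)) = t^2 * Q + c * N t"
      by (simp add: trm Q_def Nt sum.distrib sum_distrib_left)
    thus ?thesis unfolding u_istar by (simp add: N_def power2_norm_eq_inner)
  qed
  have d1: "((\<lambda>t. u \<bullet> istar \<iota> (\<psi> + t *\<^sub>R h)) has_real_derivative (u \<bullet> D h)) (at 0)"
    by (rule dir_deriv[OF D])
  have "\<psi> \<bullet> \<psi> \<noteq> 0" using n1 by auto
  hence d2: "((\<lambda>t. u \<bullet> istar \<iota> (\<psi> + t *\<^sub>R h)) has_real_derivative 0) (at 0)"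
    unfolding eqf N_def inner_line by (rule deriv_quot0)
  show ?thesis using DERIV_unique[OF d1 d2] .
qed

end

context onbsetup
begin

lemma finOm: "finite (lam ` F)" using finF by simp

lemma delta_sub:
  assumes "E \<subseteq> F" "e \<in> F"
  shows "(\<Sum>e'\<in>E. f e' * cinner e e') = (if e \<in> E then f e else 0)"
proof (cases "e \<in> E")
  case True
  have fin: "finite E" using assms finite_subset finF by blast
  have "(\<Sum>e'\<in>E. f e' * cinner e e') = f e * cinner e e + (\<Sum>e'\<in>E - {e}. f e' * cinner e e')"
    using fin True by (simp add: sum.remove)
  also have "(\<Sum>e'\<in>E - {e}. f e' * cinner e e') = 0"
    using assms orth by (intro sum.neutral) auto
  finally show ?thesis using True unit assms by simp
next
  case False
  have "(\<Sum>e'\<in>E. f e' * cinner e e') = 0"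
    using assms orth False by (intro sum.neutral) auto
  thus ?thesis using False by simp
qed

lemma crit_if:
  assumes S: "S \<subseteq> lam ` F" "finite S" "int (card S) = aff_dim (lam ` F)" and \<rho>S: "\<rho> \<in> convex hull S"
  shows "critical_value \<iota> \<rho>"
proof -
  obtain a where a: "\<forall>x\<in>S. 0 \<le> a x" "sum a S = 1" "(\<Sum>x\<in>S. a x *\<^sub>R x) = \<rho>"
    using \<rho>S S(2) by (auto simp: convex_hull_finite)
  define eo where "eo \<alpha> = (SOME e. e \<in> F \<and> lam e = \<alpha>)" for \<alpha>
  have eo: "eo \<alpha> \<in> F \<and> lam (eo \<alpha>) = \<alpha>" if "\<alpha> \<in> S" for \<alpha>
  proof -
    have "\<exists>e. e \<in> F \<and> lam e = \<alpha>" using S(1) that by blast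
    thus ?thesis unfolding eo_def by (rule someI_ex)
  qed
  define E where "E = eo ` S"
  have EF: "E \<subseteq> F" using eo by (auto simp: E_def)
  have inj: "inj_on eo S" by (metis eo inj_onI)
  have lamE: "lam e \<in> S" if "e \<in> E" for e using that eo by (auto simp: E_def)
  define \<psi> where "\<psi> = (\<Sum>e\<in>E. sqrt (a (lam e)) *\<^sub>R e)"
  have c\<psi>: "cinner e \<psi> = (if e \<in> E then of_real (sqrt (a (lam e))) else 0)" if "e \<in> F" for e
    unfolding \<psi>_def cinner_sum_right cinner_scaleR_right
    using delta_sub[OF EF that, of "\<lambda>e'. of_real (sqrt (a (lam e')))"] by simp
  have P\<psi>: "P e \<psi> = (if e \<in> E then a (lam e) else 0)" if "e \<in> F" for e
    using c\<psi>[OF that] lamE a(1) by (auto simp: P_def)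
  have sumE: "(\<Sum>e\<in>F. P e \<psi> * g e) = (\<Sum>\<alpha>\<in>S. a \<alpha> * g (eo \<alpha>))" for g :: "complex^'n \<Rightarrow> real"
  proof -
    have "(\<Sum>e\<in>F. P e \<psi> * g e) = (\<Sum>e\<in>F. if e \<in> E then a (lam e) * g e else 0)"
      by (intro sum.cong refl) (simp add: P\<psi>)
    also have "\<dots> = (\<Sum>e\<in>F \<inter> E. a (lam e) * g e)" by (simp add: sum.inter_restrict finF)
    also have "F \<inter> E = E" using EF by blast
    also have "(\<Sum>e\<in>E. a (lam e) * g e) = (\<Sum>\<alpha>\<in>S. a (lam (eo \<alpha>)) * g (eo \<alpha>))"
      unfolding E_def by (rule sum.reindex[OF inj, unfolded comp_def])
    also have "\<dots> = (\<Sum>\<alpha>\<in>S. a \<alpha> * g (eo \<alpha>))" by (intro sum.cong refl) (simp add: eo)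
    finally show ?thesis .
  qed
  have n\<psi>: "norm \<psi> = 1"
  proof -
    have "(norm \<psi>)^2 = (\<Sum>e\<in>F. P e \<psi> * 1)" by (simp add: norm_sum)
    also have "\<dots> = 1" using sumE[of "\<lambda>_. 1"] a(2) by simp
    finally show ?thesis using norm_ge_zero[of \<psi>] by (auto simp: power2_eq_1_iff)
  qed
  have istar\<psi>: "istar \<iota> \<psi> = \<rho>"
  proof (rule vec_eq_by_inner)
    fix u
    have "u \<bullet> istar \<iota> \<psi> = (\<Sum>\<alpha>\<in>S. a \<alpha> * (u \<bullet> lam (eo \<alpha>)))"
      unfolding u_istar n\<psi> sumE by simp
    also have "\<dots> = u \<bullet> \<rho>" unfolding a(3)[symmetric]
      by (simp add: inner_sum_right eo)
    finally show "u \<bullet> istar \<iota> \<psi> = u \<bullet> \<rho>" .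
  qed
  have Sne: "S \<noteq> {}" using \<rho>S by auto
  then obtain t0 where t0: "t0 \<in> S" by blast
  have "\<not> lam ` F \<subseteq> affine hull S"
  proof
    assume "lam ` F \<subseteq> affine hull S"
    hence "affine hull (lam ` F) \<subseteq> affine hull S" by (simp add: hull_minimal)
    hence "aff_dim (lam ` F) \<le> aff_dim S" by (metis aff_dim_affine_hull aff_dim_subset)
    also have "\<dots> \<le> int (card S) - 1" using aff_dim_le_card[OF S(2)] by simp
    finally show False using S(3) by simp
  qed
  then obtain \<beta> where \<beta>: "\<beta> \<in> lam ` F" "\<beta> \<notin> affine hull S" by blast
  define M where "M = (\<lambda>x. - t0 + x) ` (S - {t0})"
  obtain y z where yz: "y \<in> span M" "\<And>w. w \<in> span M \<Longrightarrow> orthogonal z w" "- t0 + \<beta> = y + z"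
    using orthogonal_subspace_decomp_exists[of M "- t0 + \<beta>"] by blast
  have z0: "z \<noteq> 0"
  proof
    assume "z = 0"
    hence "\<beta> = t0 + y" using yz(3) by (simp add: algebra_simps)
    hence "\<beta> \<in> affine hull S" using yz(1) affine_hull_span2[OF t0] by (simp add: M_def)
    thus False using \<beta> by blast
  qed
  define u where "u = z"
  define c where "c = u \<bullet> t0"
  have uS: "u \<bullet> \<alpha> = c" if "\<alpha> \<in> S" for \<alpha>
  proof (cases "\<alpha> = t0")
    case True thus ?thesis by (simp add: c_def)
  next
    case False
    hence "- t0 + \<alpha> \<in> span M" using that by (intro span_base) (auto simp: M_def)
    hence "u \<bullet> (- t0 + \<alpha>) = 0" using yz(2) by (simp add: u_def orthogonal_def)
    thus ?thesis by (simp add: c_def inner_diff_right)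
  qed
  have u\<beta>: "u \<bullet> (\<beta> - t0) \<noteq> 0"
  proof -
    have "u \<bullet> y = 0" using yz(2)[OF yz(1)] by (simp add: u_def orthogonal_def)
    hence "u \<bullet> (\<beta> - t0) = z \<bullet> z" using yz(3) by (simp add: u_def algebra_simps inner_add_right)
    thus ?thesis using z0 by simp
  qed
  have "\<forall>D. (istar \<iota> has_derivative D) (at \<psi>) \<longrightarrow> range D \<noteq> aff_direction (weights \<iota>)"
  proof (intro allI impI)
    fix D assume D: "(istar \<iota> has_derivative D) (at \<psi>)"
    have Dz: "u \<bullet> D h = 0" for h
    proof (rule dir_zero[OF D n\<psi>])
      fix e assume e: "e \<in> F" "u \<bullet> lam e \<noteq> c"
      hence "e \<notin> E" using lamE uS by blast
      thus "cinner e \<psi> = 0" using c\<psi>[OF e(1)] by simp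
    qed
    have "\<beta> - t0 \<in> aff_direction (weights \<iota>)"
    proof -
      have "\<beta> \<in> affine hull (lam ` F)" "t0 \<in> affine hull (lam ` F)"
        using \<beta>(1) t0 S(1) by (auto intro: hull_inc)
      thus ?thesis unfolding aff_direction_def weights_eq by blast
    qed
    moreover have "\<beta> - t0 \<notin> range D" using Dz u\<beta> by auto
    ultimately show "range D \<noteq> aff_direction (weights \<iota>)" by blast
  qed
  moreover have "\<psi> \<noteq> 0" using n\<psi> by auto
  ultimately show ?thesis unfolding critical_value_def using istar\<psi> by blast
qed

end

context onbsetup
begin

lemma crit_only_if:
  assumes crit: "critical_value \<iota> \<rho>"
  shows "\<exists>S. S \<subseteq> lam ` F \<and> finite S \<and> int (card S) = aff_dim (lam ` F) \<and> \<rho> \<in> convex hull S"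
proof -
  obtain \<psi> where \<psi>0: "\<psi> \<noteq> 0" and \<psi>\<rho>: "istar \<iota> \<psi> = \<rho>"
    and nd: "\<And>D. (istar \<iota> has_derivative D) (at \<psi>) \<Longrightarrow> range D \<noteq> aff_direction (lam ` F)"
    using crit unfolding critical_value_def weights_eq by blast
  define \<Omega> where "\<Omega> = lam ` F"
  define L where "L = aff_direction \<Omega>"
  define G where "G = {e\<in>F. P e \<psi> \<noteq> 0}"
  define A where "A = lam ` G"
  have AO: "A \<subseteq> \<Omega>" by (auto simp: A_def G_def \<Omega>_def)
  have \<rho>A: "\<rho> \<in> convex hull A" using istar_hull[OF \<psi>0] \<psi>\<rho> by (simp add: A_def G_def)
  have \<rho>affA: "\<rho> \<in> affine hull A" using \<rho>A convex_hull_subset_affine_hull by blast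
  have \<rho>affO: "\<rho> \<in> affine hull \<Omega>" using \<rho>affA hull_mono[OF AO] by blast
  obtain D where D: "(istar \<iota> has_derivative D) (at \<psi>)"
    using istar_diff[OF \<psi>0] unfolding differentiable_def by blast
  have linD: "linear D" using has_derivative_linear[OF D] .
  have Lsub: "L = (\<lambda>x. x - \<rho>) ` (affine hull \<Omega>)"
  proof
    show "L \<subseteq> (\<lambda>x. x - \<rho>) ` (affine hull \<Omega>)"
    proof
      fix x assume "x \<in> L"
      then obtain a b where ab: "x = a - b" "a \<in> affine hull \<Omega>" "b \<in> affine hull \<Omega>"
        unfolding L_def aff_direction_def by blast
      have "\<rho> + 1 *\<^sub>R (a - b) \<in> affine hull \<Omega>"
        by (rule mem_affine_3_minus[OF affine_affine_hull \<rho>affO ab(2,3)])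
      moreover have "x = (\<rho> + 1 *\<^sub>R (a - b)) - \<rho>" using ab by simp
      ultimately show "x \<in> (\<lambda>x. x - \<rho>) ` (affine hull \<Omega>)" by blast
    qed
  next
    show "(\<lambda>x. x - \<rho>) ` (affine hull \<Omega>) \<subseteq> L"
      unfolding L_def aff_direction_def using \<rho>affO by blast
  qed
  have Lsubsp: "subspace L"
    unfolding Lsub by (rule affine_diffs_subspace_subtract[OF affine_affine_hull \<rho>affO])
  have "affine hull A \<noteq> affine hull \<Omega>"
  proof
    assume eqA: "affine hull A = affine hull \<Omega>"
    have "range D \<subseteq> L"
    proof
      fix x assume "x \<in> range D"
      then obtain h where h: "x = D h" by blast
      obtain y z where yz: "y \<in> span L" "\<And>w. w \<in> span L \<Longrightarrow> orthogonal z w" "D h = y + z"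
        using orthogonal_subspace_decomp_exists[of L "D h"] by blast
      have yL: "y \<in> L" using yz(1) Lsubsp span_eq_iff[of L] by blast
      have zL: "z \<bullet> w = 0" if "w \<in> L" for w
        using yz(2)[of w] that span_base[of w L] by (simp add: orthogonal_def)
      have d1: "((\<lambda>t. z \<bullet> istar \<iota> (\<psi> + t *\<^sub>R h)) has_real_derivative (z \<bullet> D h)) (at 0)"
        by (rule dir_deriv[OF D])
      have ev: "eventually (\<lambda>t. z \<bullet> istar \<iota> (\<psi> + t *\<^sub>R h) = z \<bullet> \<rho>) (at (0::real))"
      proof -
        have "((\<lambda>t::real. \<psi> + t *\<^sub>R h) \<longlongrightarrow> \<psi> + 0 *\<^sub>R h) (at 0)"
          by (intro tendsto_intros)
        hence "eventually (\<lambda>t. \<psi> + t *\<^sub>R h \<noteq> 0) (at (0::real))"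
          using \<psi>0 by (intro tendsto_imp_eventually_ne) auto
        thus ?thesis
        proof (rule eventually_mono)
          fix t assume t: "\<psi> + t *\<^sub>R h \<noteq> 0"
          have "istar \<iota> (\<psi> + t *\<^sub>R h) \<in> convex hull \<Omega>"
            using istar_hull[OF t] hull_mono[of "lam ` {e \<in> F. P e (\<psi> + t *\<^sub>R h) \<noteq> 0}" \<Omega>]
            by (auto simp: \<Omega>_def)
          hence "istar \<iota> (\<psi> + t *\<^sub>R h) \<in> affine hull \<Omega>"
            using convex_hull_subset_affine_hull by blast
          hence "istar \<iota> (\<psi> + t *\<^sub>R h) - \<rho> \<in> L" unfolding Lsub by blast
          hence "z \<bullet> (istar \<iota> (\<psi> + t *\<^sub>R h) - \<rho>) = 0" by (rule zL)
          thus "z \<bullet> istar \<iota> (\<psi> + t *\<^sub>R h) = z \<bullet> \<rho>" by (simp add: inner_diff_right)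
        qed
      qed
      have "((\<lambda>t. z \<bullet> istar \<iota> (\<psi> + t *\<^sub>R h)) has_real_derivative 0) (at 0)"
        using has_field_derivative_cong_eventually[OF ev] \<psi>\<rho> by simp
      hence "z \<bullet> D h = 0" using DERIV_unique[OF d1] by blast
      hence "z \<bullet> z = 0" using yz(3) zL[OF yL] by (simp add: inner_add_right)
      hence "z = 0" by simp
      thus "x \<in> L" using h yz(3) yL by simp
    qed
    moreover have "L \<subseteq> range D"
    proof
      fix x assume "x \<in> L"
      then obtain a b where ab: "x = a - b" "a \<in> affine hull \<Omega>" "b \<in> affine hull \<Omega>"
        unfolding L_def aff_direction_def by blast
      have rsub: "subspace (range D)" using linD by (simp add: linear_subspace_image)
      have gens: "(\<lambda>x. - \<rho> + x) ` (insert \<rho> A - {\<rho>}) \<subseteq> range D"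
      proof
        fix v assume "v \<in> (\<lambda>x. - \<rho> + x) ` (insert \<rho> A - {\<rho>})"
        then obtain e where e: "e \<in> G" "v = - \<rho> + lam e" by (auto simp: A_def)
        have "lam e - istar \<iota> \<psi> \<in> range D"
          using e(1) by (intro dir_component[OF D \<psi>0]) (auto simp: G_def)
        thus "v \<in> range D" using e(2) \<psi>\<rho> by simp
      qed
      have spD: "span ((\<lambda>x. - \<rho> + x) ` (insert \<rho> A - {\<rho>})) \<subseteq> range D"
        by (rule span_minimal[OF gens rsub])
      have "affine hull \<Omega> = affine hull (insert \<rho> A)"
        using eqA hull_redundant[OF \<rho>affA] by simp
      also have "\<dots> = (\<lambda>x. \<rho> + x) ` span ((\<lambda>x. - \<rho> + x) ` (insert \<rho> A - {\<rho>}))"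
        by (rule affine_hull_span2) simp
      finally have "a \<in> \<dots>" "b \<in> \<dots>" using ab by auto
      then obtain s1 s2 where s: "a = \<rho> + s1" "b = \<rho> + s2" "s1 \<in> range D" "s2 \<in> range D"
        using spD by blast
      have "s1 - s2 \<in> range D" using rsub s(3,4) by (rule subspace_diff)
      thus "x \<in> range D" using ab(1) s(1,2) by simp
    qed
    ultimately have "range D = L" by blast
    thus False using nd[OF D] by (simp add: L_def \<Omega>_def)
  qed
  hence "affine hull A \<subset> affine hull \<Omega>" using hull_mono[OF AO] by blast
  hence ltA: "aff_dim A < aff_dim \<Omega>" by (rule aff_dim_psubset)
  obtain S0 where S0: "finite S0" "S0 \<subseteq> A" "int (card S0) \<le> aff_dim A + 1" "\<rho> \<in> convex hull S0"
    using \<rho>A unfolding caratheodory_aff_dim[of A] by blast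
  define d where "d = aff_dim \<Omega>"
  have finO: "finite \<Omega>" using finOm by (simp add: \<Omega>_def)
  have dle: "d \<le> int (card \<Omega>) - 1" using aff_dim_le_card[OF finO] by (simp add: d_def)
  have c0: "int (card S0) \<le> d" using S0(3) ltA by (simp add: d_def)
  have S0O: "S0 \<subseteq> \<Omega>" using S0(2) AO by blast
  have "nat d - card S0 \<le> card (\<Omega> - S0)"
    using dle c0 card_Diff_subset[OF S0(1) S0O] card_mono[OF finO S0O] by linarith
  then obtain T where T: "T \<subseteq> \<Omega> - S0" "card T = nat d - card S0" "finite T"
    using obtain_subset_with_card_n by blast
  define S where "S = S0 \<union> T"
  have "card S = card S0 + card T"
    unfolding S_def using T S0(1) by (intro card_Un_disjoint) auto
  hence "int (card S) = d" using T(2) c0 by simp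
  moreover have "S \<subseteq> \<Omega>" using T S0O by (auto simp: S_def)
  moreover have "finite S" using T S0 by (simp add: S_def)
  moreover have "\<rho> \<in> convex hull S" using S0(4) hull_mono[of S0 S] by (auto simp: S_def)
  ultimately show ?thesis by (auto simp: \<Omega>_def d_def)
qed

lemma main:
  shows "critical_value \<iota> \<rho> \<longleftrightarrow>
    (\<exists>S. S \<subseteq> weights \<iota> \<and> finite S \<and> int (card S) = aff_dim (convex hull (weights \<iota>))
         \<and> \<rho> \<in> convex hull S)"
  unfolding weights_eq aff_dim_convex_hull
  using crit_if crit_only_if by blast

end

theorem proposition4p16:
  fixes \<iota> :: "'v::euclidean_space \<Rightarrow> complex^'n^'n" and W :: "complex^'n^'n" and \<rho> :: 'v
  assumes "abelian_theory \<iota> W"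
    and "\<rho> \<in> convex hull (weights \<iota>)"
  shows "critical_value \<iota> \<rho> \<longleftrightarrow>
    (\<exists>S. S \<subseteq> weights \<iota> \<and> finite S \<and> int (card S) = aff_dim (convex hull (weights \<iota>))
         \<and> \<rho> \<in> convex hull S)"
proof -
  obtain F where F: "onb \<iota> F" "\<forall>\<phi>. \<phi> = (\<Sum>e\<in>F. cinner e \<phi> *s e)"
    using exists_onb[OF assms(1)] by blast
  have lin: "linear \<iota>" and herm: "\<And>v. hermitian (\<iota> v)"
    using assms(1) by (auto simp: abelian_theory_def functional_theory_def)
  interpret onbsetup \<iota> F
    by (rule onbsetup.intro[OF lin herm F(1)]) (use F(2) in blast)
  show ?thesis by (rule main)
qed

end
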